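(* Let $\Re$ be a commutative Krasner hyperring with identity $1\ne0$, $\phi:L(\Re)\to L(\Re)\cup\{\emptyset\}$ a function, and $T$ a proper $\phi$-primary hyperideal of $\Re$. If $T$ is not primary, then $T^2\subseteq\phi(T)$. Equivalently, if $T^2\not\subseteq\phi(T)$ then $T$ is primary.
   Context: Krasner hyperring: $(\Re,\oplus)$ canonical hypergroup, $(\Re,\circ)$ commutative semigroup with identity $1\ne0$, $0$ absorbing, distributive. Hyperideals and $L(\Re)$ as usual; $T^2$ is the hyperideal generated by $\{a\circ b:a,b\in T\}$. $T$ is primary if $a\circ b\in T$ implies $a\in T$ or $b^k\in T$ for some $k\in\mathbb{N}$; $T$ is $\phi$-primary if $a\circ b\in T$, $a\circ b\notin\phi(T)$ imply $a\in T$ or $b^k\in T$ for some $k\in\mathbb{N}$. *)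

theory Defs
  imports Main
begin

definition hsum :: "('a \<Rightarrow> 'a \<Rightarrow> 'a set) \<Rightarrow> 'a set \<Rightarrow> 'a set \<Rightarrow> 'a set" where
  "hsum add A B = (\<Union>a\<in>A. \<Union>b\<in>B. add a b)"

definition krasner_hyperring ::
  "'a set \<Rightarrow> ('a \<Rightarrow> 'a \<Rightarrow> 'a set) \<Rightarrow> ('a \<Rightarrow> 'a \<Rightarrow> 'a) \<Rightarrow> 'a \<Rightarrow> 'a \<Rightarrow> ('a \<Rightarrow> 'a) \<Rightarrow> bool" where
  "krasner_hyperring R add mul zero one neg \<longleftrightarrow>
     \<comment> \<open>(R, add) is a canonical hypergroup\<close>
     (\<forall>x\<in>R. \<forall>y\<in>R. add x y \<noteq> {} \<and> add x y \<subseteq> R) \<and>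
     (\<forall>x\<in>R. \<forall>y\<in>R. \<forall>z\<in>R. hsum add (add x y) {z} = hsum add {x} (add y z)) \<and>
     (\<forall>x\<in>R. \<forall>y\<in>R. add x y = add y x) \<and>
     zero \<in> R \<and> (\<forall>x\<in>R. add x zero = {x}) \<and>
     (\<forall>x\<in>R. neg x \<in> R \<and> zero \<in> add x (neg x) \<and>
        (\<forall>y\<in>R. zero \<in> add x y \<longrightarrow> y = neg x)) \<and>
     (\<forall>x\<in>R. \<forall>y\<in>R. \<forall>z\<in>R. z \<in> add x y \<longrightarrow> y \<in> add (neg x) z \<and> x \<in> add z (neg y)) \<and>
     \<comment> \<open>(R, mul) is a commutative semigroup with identity one \<noteq> zero\<close>
     (\<forall>x\<in>R. \<forall>y\<in>R. mul x y \<in> R) \<and>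
     (\<forall>x\<in>R. \<forall>y\<in>R. \<forall>z\<in>R. mul (mul x y) z = mul x (mul y z)) \<and>
     (\<forall>x\<in>R. \<forall>y\<in>R. mul x y = mul y x) \<and>
     one \<in> R \<and> one \<noteq> zero \<and> (\<forall>x\<in>R. mul one x = x) \<and>
     \<comment> \<open>zero is absorbing\<close>
     (\<forall>x\<in>R. mul zero x = zero) \<and>
     \<comment> \<open>distributivity\<close>
     (\<forall>x\<in>R. \<forall>y\<in>R. \<forall>z\<in>R. mul z ` add x y = add (mul z x) (mul z y))"

definition hyperideal ::
  "'a set \<Rightarrow> ('a \<Rightarrow> 'a \<Rightarrow> 'a set) \<Rightarrow> ('a \<Rightarrow> 'a \<Rightarrow> 'a) \<Rightarrow> ('a \<Rightarrow> 'a) \<Rightarrow> 'a set \<Rightarrow> bool" where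
  "hyperideal R add mul neg I \<longleftrightarrow>
     I \<noteq> {} \<and> I \<subseteq> R \<and>
     (\<forall>a\<in>I. \<forall>b\<in>I. add a (neg b) \<subseteq> I) \<and>
     (\<forall>a\<in>I. \<forall>r\<in>R. mul r a \<in> I)"

definition hideals where
  "hideals R add mul neg = {I. hyperideal R add mul neg I}"

definition hgen where
  "hgen R add mul neg S = \<Inter>{I. hyperideal R add mul neg I \<and> S \<subseteq> I}"

definition hsquare where
  "hsquare R add mul neg T = hgen R add mul neg {mul a b | a b. a \<in> T \<and> b \<in> T}"

fun hpow :: "('a \<Rightarrow> 'a \<Rightarrow> 'a) \<Rightarrow> 'a \<Rightarrow> 'a \<Rightarrow> nat \<Rightarrow> 'a" where
  "hpow mul one b 0 = one"
| "hpow mul one b (Suc k) = mul b (hpow mul one b k)"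

definition primary_hideal where
  "primary_hideal R add mul one neg T \<longleftrightarrow>
     hyperideal R add mul neg T \<and>
     (\<forall>a\<in>R. \<forall>b\<in>R. mul a b \<in> T \<longrightarrow> a \<in> T \<or> (\<exists>k>0. hpow mul one b k \<in> T))"

definition phi_primary_hideal where
  "phi_primary_hideal R add mul one neg phi T \<longleftrightarrow>
     hyperideal R add mul neg T \<and>
     (\<forall>a\<in>R. \<forall>b\<in>R. mul a b \<in> T \<longrightarrow> mul a b \<notin> phi T \<longrightarrow>
        a \<in> T \<or> (\<exists>k>0. hpow mul one b k \<in> T))"

end

theory Submission
  imports Defs
begin

locale KH =
  fixes R :: "'a set" and add :: "'a \<Rightarrow> 'a \<Rightarrow> 'a set" and mul :: "'a \<Rightarrow> 'a \<Rightarrow> 'a"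
    and zero one :: 'a and neg :: "'a \<Rightarrow> 'a"
  assumes K: "krasner_hyperring R add mul zero one neg"
begin

lemmas C1 = K[unfolded krasner_hyperring_def]
lemmas A1 = C1[THEN conjunct1]
lemmas C2 = C1[THEN conjunct2]
lemmas A2 = C2[THEN conjunct1]
lemmas C3 = C2[THEN conjunct2]
lemmas A3 = C3[THEN conjunct1]
lemmas C4 = C3[THEN conjunct2]
lemmas A4 = C4[THEN conjunct1]
lemmas C5 = C4[THEN conjunct2]
lemmas A5 = C5[THEN conjunct1]
lemmas C6 = C5[THEN conjunct2]
lemmas A6 = C6[THEN conjunct1]
lemmas C7 = C6[THEN conjunct2]
lemmas A7 = C7[THEN conjunct1]
lemmas C8 = C7[THEN conjunct2]
lemmas A8 = C8[THEN conjunct1]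
lemmas C9 = C8[THEN conjunct2]
lemmas A9 = C9[THEN conjunct1]
lemmas C10 = C9[THEN conjunct2]
lemmas A10 = C10[THEN conjunct1]
lemmas C11 = C10[THEN conjunct2]
lemmas A11 = C11[THEN conjunct1]
lemmas C12 = C11[THEN conjunct2]
lemmas A12 = C12[THEN conjunct1]
lemmas C13 = C12[THEN conjunct2]
lemmas A13 = C13[THEN conjunct1]
lemmas C14 = C13[THEN conjunct2]
lemmas A14 = C14[THEN conjunct1]
lemmas C15 = C14[THEN conjunct2]
lemmas A15 = C15

lemma add_R: "x \<in> R \<Longrightarrow> y \<in> R \<Longrightarrow> add x y \<subseteq> R"
  using A1 by blast
lemma add_ne: "x \<in> R \<Longrightarrow> y \<in> R \<Longrightarrow> add x y \<noteq> {}"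
  using A1 by blast
lemma assoc: "x \<in> R \<Longrightarrow> y \<in> R \<Longrightarrow> z \<in> R \<Longrightarrow> hsum add (add x y) {z} = hsum add {x} (add y z)"
  using A2 by blast
lemma addc: "x \<in> R \<Longrightarrow> y \<in> R \<Longrightarrow> add x y = add y x"
  using A3 by blast
lemma zero_R: "zero \<in> R"
  using A4 by blast
lemma add_zero: "x \<in> R \<Longrightarrow> add x zero = {x}"
  using A5 by blast
lemma neg_R: "x \<in> R \<Longrightarrow> neg x \<in> R"
  using A6 by blast
lemma neg_inv: "x \<in> R \<Longrightarrow> zero \<in> add x (neg x)"
  using A6 by blast
lemma neg_uniq: "x \<in> R \<Longrightarrow> y \<in> R \<Longrightarrow> zero \<in> add x y \<Longrightarrow> y = neg x"
  using A6 by blast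
lemma rev1: "x \<in> R \<Longrightarrow> y \<in> R \<Longrightarrow> z \<in> R \<Longrightarrow> z \<in> add x y \<Longrightarrow> y \<in> add (neg x) z"
  using A7 by blast
lemma rev2: "x \<in> R \<Longrightarrow> y \<in> R \<Longrightarrow> z \<in> R \<Longrightarrow> z \<in> add x y \<Longrightarrow> x \<in> add z (neg y)"
  using A7 by blast
lemma mul_R: "x \<in> R \<Longrightarrow> y \<in> R \<Longrightarrow> mul x y \<in> R"
  using A8 by blast
lemma mulA: "x \<in> R \<Longrightarrow> y \<in> R \<Longrightarrow> z \<in> R \<Longrightarrow> mul (mul x y) z = mul x (mul y z)"
  using A9 by blast
lemma mulC: "x \<in> R \<Longrightarrow> y \<in> R \<Longrightarrow> mul x y = mul y x"
  using A10 by blast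
lemma one_R: "one \<in> R"
  using A11 by blast
lemma one_mul: "x \<in> R \<Longrightarrow> mul one x = x"
  using A13 by blast
lemma zero_mul: "x \<in> R \<Longrightarrow> mul zero x = zero"
  using A14 by blast
lemma distr: "x \<in> R \<Longrightarrow> y \<in> R \<Longrightarrow> z \<in> R \<Longrightarrow> mul z ` add x y = add (mul z x) (mul z y)"
  using A15 by blast

lemma mul_zero: "x \<in> R \<Longrightarrow> mul x zero = zero"
  using mulC zero_mul zero_R by metis

lemma neg_neg: "x \<in> R \<Longrightarrow> neg (neg x) = x"
  by (metis addc neg_R neg_inv neg_uniq)

lemma neg_mul: "x \<in> R \<Longrightarrow> mul x (neg one) = neg x"
proof -
  assume x: "x \<in> R"
  have "mul x zero \<in> mul x ` add one (neg one)" using neg_inv[OF one_R] by blast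
  then have "zero \<in> add (mul x one) (mul x (neg one))"
    using distr[OF one_R neg_R[OF one_R] x] mul_zero[OF x] by simp
  then show ?thesis using x one_R neg_R mul_R mulC one_mul neg_uniq by metis
qed

lemma hideal_R: "hyperideal R add mul neg I \<Longrightarrow> I \<subseteq> R"
  unfolding hyperideal_def by blast

lemma hideal_neg: "hyperideal R add mul neg I \<Longrightarrow> p \<in> I \<Longrightarrow> neg p \<in> I"
  unfolding hyperideal_def using neg_mul neg_R one_R mulC
  by (metis subsetD)

lemma hideal_mul: "hyperideal R add mul neg I \<Longrightarrow> p \<in> I \<Longrightarrow> r \<in> R \<Longrightarrow> mul r p \<in> I"
  unfolding hyperideal_def by blast

lemma hideal_mul2: "hyperideal R add mul neg I \<Longrightarrow> p \<in> I \<Longrightarrow> r \<in> R \<Longrightarrow> mul p r \<in> I"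
  using hideal_mul hideal_R mulC by (metis subsetD)

lemma hideal_add: "hyperideal R add mul neg I \<Longrightarrow> p \<in> I \<Longrightarrow> q \<in> I \<Longrightarrow> add p q \<subseteq> I"
proof -
  assume I: "hyperideal R add mul neg I" and p: "p \<in> I" and q: "q \<in> I"
  have "neg q \<in> I" using hideal_neg I q by blast
  then have "add p (neg (neg q)) \<subseteq> I" using I p unfolding hyperideal_def by blast
  then show ?thesis using neg_neg hideal_R I q by (metis subsetD)
qed

lemma hideal_zero: "hyperideal R add mul neg I \<Longrightarrow> zero \<in> I"
proof -
  assume I: "hyperideal R add mul neg I"
  then obtain p where p: "p \<in> I" unfolding hyperideal_def by blast
  then have "add p (neg p) \<subseteq> I" using I unfolding hyperideal_def by blast
  then show ?thesis using neg_inv hideal_R I p by blast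
qed

lemma hideal_sub: "hyperideal R add mul neg I \<Longrightarrow> p \<in> I \<Longrightarrow> z \<in> I \<Longrightarrow> y \<in> R
   \<Longrightarrow> z \<in> add p y \<Longrightarrow> y \<in> I"
proof -
  assume I: "hyperideal R add mul neg I" and p: "p \<in> I" and z: "z \<in> I" and y: "y \<in> R"
    and zz: "z \<in> add p y"
  have "y \<in> add (neg p) z" using rev1 hideal_R I p z y zz by blast
  moreover have "add (neg p) z \<subseteq> I" using hideal_add hideal_neg I p z by blast
  ultimately show ?thesis by blast
qed

lemma hpow_R: "b \<in> R \<Longrightarrow> hpow mul one b k \<in> R"
  by (induction k) (auto simp: one_R mul_R)

lemma pow_perturb:
  assumes I: "hyperideal R add mul neg I" and b: "b \<in> R" and y: "y \<in> I" and d: "d \<in> add b y"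
  shows "\<exists>t\<in>I. hpow mul one b k \<in> add (hpow mul one d k) t"
proof (induction k)
  case 0
  show ?case using hideal_zero[OF I] add_zero[OF one_R] by auto
next
  case (Suc k)
  have yR: "y \<in> R" using I y hideal_R by blast
  have dR: "d \<in> R" using add_R[OF b yR] d by blast
  from Suc obtain t where t: "t \<in> I" and bk: "hpow mul one b k \<in> add (hpow mul one d k) t" by blast
  define B where "B = hpow mul one b k"
  define D where "D = hpow mul one d k"
  have BR: "B \<in> R" and DR: "D \<in> R" using hpow_R b dR B_def D_def by auto
  have tR: "t \<in> R" using t I hideal_R by blast
  have "mul b B \<in> mul b ` add D t" using bk B_def D_def by blast
  then have e1: "mul b B \<in> add (mul b D) (mul b t)" using distr[OF DR tR b] by simp
  have "b \<in> add d (neg y)" using rev2[OF b yR dR d] .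
  then have "mul D b \<in> mul D ` add d (neg y)" by blast
  then have e2: "mul b D \<in> add (mul D d) (mul D (neg y))"
    using distr[OF dR neg_R[OF yR] DR] mulC[OF b DR] by simp
  have t1: "mul D (neg y) \<in> I" using hideal_mul I hideal_neg y DR by blast
  have t2: "mul b t \<in> I" using hideal_mul I t b by blast
  have "mul b B \<in> hsum add (add (mul D d) (mul D (neg y))) {mul b t}"
    using e1 e2 unfolding hsum_def by blast
  also have "\<dots> = hsum add {mul D d} (add (mul D (neg y)) (mul b t))"
    using assoc mul_R DR dR neg_R yR b tR by simp
  finally obtain t' where t': "t' \<in> add (mul D (neg y)) (mul b t)"
    and m: "mul b B \<in> add (mul D d) t'" unfolding hsum_def by blast
  have "t' \<in> I" using hideal_add[OF I t1 t2] t' by blast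
  moreover have "mul D d = hpow mul one d (Suc k)" using D_def mulC[OF DR dR] by simp
  ultimately show ?case using m B_def by auto
qed

end

theorem mainTheorem12:
  fixes R :: "'a set" and add :: "'a \<Rightarrow> 'a \<Rightarrow> 'a set" and mul :: "'a \<Rightarrow> 'a \<Rightarrow> 'a"
    and zero one :: 'a and neg :: "'a \<Rightarrow> 'a" and phi :: "'a set \<Rightarrow> 'a set" and T :: "'a set"
  assumes "krasner_hyperring R add mul zero one neg"
    and "\<forall>I \<in> hideals R add mul neg. phi I \<in> hideals R add mul neg \<union> {{}}"
    and "T \<noteq> R"
    and "phi_primary_hideal R add mul one neg phi T"
    and "\<not> primary_hideal R add mul one neg T"
  shows "hsquare R add mul neg T \<subseteq> phi T"
proof -
  interpret KH R add mul zero one neg using assms(1) by unfold_locales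
  have PP: "phi_primary_hideal R add mul one neg phi T" by fact
  have TI: "hyperideal R add mul neg T" using PP unfolding phi_primary_hideal_def by blast
  have TR: "T \<subseteq> R" using TI hideal_R by blast
  obtain a b where aR: "a \<in> R" and bR: "b \<in> R" and abT: "mul a b \<in> T" and aT: "a \<notin> T"
    and bk: "\<forall>k>0. hpow mul one b k \<notin> T"
    using assms(5) TI unfolding primary_hideal_def by blast
  have php: "\<And>u v. u \<in> R \<Longrightarrow> v \<in> R \<Longrightarrow> mul u v \<in> T \<Longrightarrow> \<not> (u \<in> T \<or> (\<exists>k>0. hpow mul one v k \<in> T))
      \<Longrightarrow> mul u v \<in> phi T"
    using PP unfolding phi_primary_hideal_def by blast
  have abP: "mul a b \<in> phi T" using php aR bR abT aT bk by blast
  have "T \<in> hideals R add mul neg" using TI unfolding hideals_def by blast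
  then have "phi T \<in> hideals R add mul neg \<union> {{}}" using assms(2) by blast
  then have P: "hyperideal R add mul neg (phi T)" using abP unfolding hideals_def by blast
  have PR: "phi T \<subseteq> R" using P hideal_R by blast
  have pert: "\<And>d y k. y \<in> T \<Longrightarrow> d \<in> add b y \<Longrightarrow> k > 0 \<Longrightarrow> hpow mul one d k \<notin> T"
  proof
    fix d y k assume y: "y \<in> T" and d: "d \<in> add b y" and k: "(k::nat) > 0"
      and dk: "hpow mul one d k \<in> T"
    obtain t where t: "t \<in> I" "hpow mul one b k \<in> add (hpow mul one d k) t" if "I = T" for I
      using pow_perturb[OF TI bR y d, of k] by blast
    have "hpow mul one b k \<in> T" using hideal_add[OF TI dk] t by blast
    then show False using bk k by blast
  qed
  have ct: "\<And>c x. x \<in> T \<Longrightarrow> c \<in> add a x \<Longrightarrow> c \<notin> T"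
  proof
    fix c x assume x: "x \<in> T" and c: "c \<in> add a x" and cT: "c \<in> T"
    have xR: "x \<in> R" using x TR by blast
    have "a \<in> add c (neg x)" using rev2[OF aR xR _ c] cT TR by blast
    moreover have "add c (neg x) \<subseteq> T" using hideal_add[OF TI cT hideal_neg[OF TI x]] .
    ultimately show False using aT by blast
  qed
  have S1: "mul b x \<in> phi T" if x: "x \<in> T" for x
  proof -
    have xR: "x \<in> R" using x TR by blast
    obtain c where c: "c \<in> add a x" using add_ne[OF aR xR] by blast
    have cR: "c \<in> R" using c add_R[OF aR xR] by blast
    have e: "mul b c \<in> add (mul b a) (mul b x)" using distr[OF aR xR bR] c by blast
    have baT: "mul b a \<in> T" using abT mulC aR bR by metis
    have "mul b c \<in> T" using e hideal_add[OF TI baT hideal_mul[OF TI x bR]] by blast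
    then have "mul c b \<in> T" using mulC bR cR by metis
    then have "mul c b \<in> phi T" using php[OF cR bR] ct[OF x c] bk by blast
    then have bcP: "mul b c \<in> phi T" using mulC bR cR by metis
    have "mul b a \<in> phi T" using abP mulC aR bR by metis
    then show ?thesis using hideal_sub[OF P _ bcP mul_R[OF bR xR] e] by blast
  qed
  have S2: "mul a y \<in> phi T" if y: "y \<in> T" for y
  proof -
    have yR: "y \<in> R" using y TR by blast
    obtain d where d: "d \<in> add b y" using add_ne[OF bR yR] by blast
    have dR: "d \<in> R" using d add_R[OF bR yR] by blast
    have e: "mul a d \<in> add (mul a b) (mul a y)" using distr[OF bR yR aR] d by blast
    have "mul a d \<in> T" using e hideal_add[OF TI abT hideal_mul[OF TI y aR]] by blast
    then have "mul a d \<in> phi T" using php[OF aR dR] aT pert[OF y d] by blast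
    then show ?thesis using hideal_sub[OF P abP _ mul_R[OF aR yR] e] by blast
  qed
  have S3: "mul x y \<in> phi T" if x: "x \<in> T" and y: "y \<in> T" for x y
  proof -
    have xR: "x \<in> R" using x TR by blast
    have yR: "y \<in> R" using y TR by blast
    obtain c where c: "c \<in> add a x" using add_ne[OF aR xR] by blast
    have cR: "c \<in> R" using c add_R[OF aR xR] by blast
    obtain d where d: "d \<in> add b y" using add_ne[OF bR yR] by blast
    have dR: "d \<in> R" using d add_R[OF bR yR] by blast
    have e1: "mul c d \<in> add (mul c b) (mul c y)" using distr[OF bR yR cR] d by blast
    have e2: "mul b c \<in> add (mul b a) (mul b x)" using distr[OF aR xR bR] c by blast
    have e3: "mul y c \<in> add (mul y a) (mul y x)" using distr[OF aR xR yR] c by blast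
    have baP: "mul b a \<in> phi T" using abP mulC aR bR by metis
    have baT: "mul b a \<in> T" using abT mulC aR bR by metis
    have cbP: "mul c b \<in> phi T" using e2 hideal_add[OF P baP S1[OF x]] mulC bR cR by auto
    have cbT: "mul c b \<in> T" using e2 hideal_add[OF TI baT hideal_mul[OF TI x bR]] mulC bR cR by auto
    have cyT: "mul c y \<in> T" using hideal_mul[OF TI y cR] mulC by blast
    have "mul c d \<in> T" using e1 hideal_add[OF TI cbT cyT] by blast
    then have cdP: "mul c d \<in> phi T" using php[OF cR dR] ct[OF x c] pert[OF y d] by blast
    have cyP: "mul c y \<in> phi T" using hideal_sub[OF P cbP cdP mul_R[OF cR yR] e1] .
    then have ycP: "mul y c \<in> phi T" using mulC cR yR by metis
    have yaP: "mul y a \<in> phi T" using S2[OF y] mulC aR yR by metis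
    have "mul y x \<in> phi T" using hideal_sub[OF P yaP ycP mul_R[OF yR xR] e3] .
    then show ?thesis using mulC xR yR by metis
  qed
  have "{mul a b | a b. a \<in> T \<and> b \<in> T} \<subseteq> phi T" using S3 by blast
  then show ?thesis unfolding hsquare_def hgen_def using P by blast
qed

end
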